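(* Let $a\in[0,\infty)$ and let $\theta:[0,1]\to[0,\infty]$ and $\vartheta:[0,\infty]\to[0,1]$ be continuous and decreasing functions such that (i) $\vartheta(x)=1$ if and only if $x\in[0,a]$, and (ii) the function $O_{\theta,\vartheta}:[0,1]^2\to[0,1]$, $O_{\theta,\vartheta}(x,y)=\vartheta(\theta(x)+\theta(y))$, is an overlap function. Then $\theta(x)=\frac{a}{2}$ if and only if $x=1$.
   Context: "Decreasing" means non-increasing and "increasing" means non-decreasing. Arithmetic in $[0,\infty]$ uses $c+\infty=\infty$; continuity on $[0,\infty]$ refers to the usual topology of the extended half-line. An overlap function is a map $O:[0,1]^2\to[0,1]$ that is (O1) commutative, (O2) $O(x,y)=0$ iff $xy=0$, (O3) $O(x,y)=1$ iff $xy=1$, (O4) increasing in each variable, (O5) continuous. *)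

theory Defs
  imports "HOL-Analysis.Analysis" "HOL-Library.Extended_Nonnegative_Real"
begin

definition is_overlap :: "(real \<Rightarrow> real \<Rightarrow> real) \<Rightarrow> bool" where
  "is_overlap F \<longleftrightarrow>
     (\<forall>x\<in>{0..1}. \<forall>y\<in>{0..1}. F x y \<in> {0..1}) \<and>
     (\<forall>x\<in>{0..1}. \<forall>y\<in>{0..1}. F x y = F y x) \<and>
     (\<forall>x\<in>{0..1}. \<forall>y\<in>{0..1}. F x y = 0 \<longleftrightarrow> x * y = 0) \<and>
     (\<forall>x\<in>{0..1}. \<forall>y\<in>{0..1}. F x y = 1 \<longleftrightarrow> x * y = 1) \<and>
     (\<forall>x\<in>{0..1}. \<forall>x'\<in>{0..1}. \<forall>y\<in>{0..1}. x \<le> x' \<longrightarrow> F x y \<le> F x' y) \<and>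
     (\<forall>x\<in>{0..1}. \<forall>y\<in>{0..1}. \<forall>y'\<in>{0..1}. y \<le> y' \<longrightarrow> F x y \<le> F x y') \<and>
     continuous_on ({0..1} \<times> {0..1}) (\<lambda>(x, y). F x y)"

end

theory Submission
  imports Defs
begin

theorem proposition3p1:
  fixes a :: real and \<theta> :: "real \<Rightarrow> ennreal" and \<phi> :: "ennreal \<Rightarrow> real"
  assumes a_nonneg: "0 \<le> a"
    and theta_cont: "continuous_on {0..1} \<theta>"
    and theta_dec: "\<forall>x\<in>{0..1}. \<forall>y\<in>{0..1}. x \<le> y \<longrightarrow> \<theta> y \<le> \<theta> x"
    and vtheta_range: "\<forall>t. \<phi> t \<in> {0..1}"
    and vtheta_cont: "continuous_on UNIV \<phi>"
    and vtheta_dec: "\<forall>s t. s \<le> t \<longrightarrow> \<phi> t \<le> \<phi> s"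
    and vtheta_one: "\<forall>t. \<phi> t = 1 \<longleftrightarrow> t \<le> ennreal a"
    and overlap: "is_overlap (\<lambda>x y. \<phi> (\<theta> x + \<theta> y))"
  shows "\<forall>x\<in>{0..1}. \<theta> x = ennreal (a / 2) \<longleftrightarrow> x = 1"
proof -
  have O4: "\<And>x y. x \<in> {0..1} \<Longrightarrow> y \<in> {0..1} \<Longrightarrow> (\<theta> x + \<theta> y \<le> ennreal a) \<longleftrightarrow> x * y = 1"
    using overlap vtheta_one unfolding is_overlap_def by auto
  have h1: "\<theta> 1 + \<theta> 1 \<le> ennreal a" using O4[of 1 1] by simp
  have h2: "\<not> (\<theta> 1 + \<theta> 1 < ennreal a)"
  proof
    assume lt: "\<theta> 1 + \<theta> 1 < ennreal a"
    have "((\<lambda>x. \<theta> x + \<theta> 1) \<longlongrightarrow> \<theta> 1 + \<theta> 1) (at 1 within {0..1})"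
      using theta_cont by (intro tendsto_add tendsto_const)
        (auto simp: continuous_on_def)
    from order_tendstoD(2)[OF this lt]
    have "eventually (\<lambda>x. \<theta> x + \<theta> 1 < ennreal a) (at 1 within {0..1})" .
    then obtain d where d: "d > 0" and hd: "\<And>x. x \<in> {0..1} \<Longrightarrow> x \<noteq> 1 \<Longrightarrow> dist x 1 < d \<Longrightarrow> \<theta> x + \<theta> 1 < ennreal a"
      unfolding eventually_at by blast
    define x where "x = max 0 (1 - d/2)"
    have xin: "x \<in> {0..1}" and xne: "x \<noteq> 1" and xd: "dist x 1 < d"
      using d by (auto simp: x_def dist_real_def)
    have "\<theta> x + \<theta> 1 \<le> ennreal a" using hd[OF xin xne xd] by simp
    with O4[OF xin, of 1] xne show False by simp
  qed
  have eq: "\<theta> 1 + \<theta> 1 = ennreal a" using h1 h2 by (simp add: order.not_eq_order_implies_strict)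
  have t1: "\<theta> 1 = ennreal (a/2)"
  proof -
    have "\<theta> 1 \<noteq> top" using eq by (metis ennreal_neq_top ennreal_add_eq_top)
    then obtain r where r: "r \<ge> 0" "\<theta> 1 = ennreal r" by (cases "\<theta> 1" rule: ennreal_cases) auto
    hence "ennreal (r + r) = ennreal a" using eq by (simp flip: ennreal_plus)
    hence "r + r = a" using r a_nonneg by simp
    thus ?thesis using r by simp
  qed
  show ?thesis
  proof (intro ballI iffI)
    fix x :: real assume xin: "x \<in> {0..1}" and tx: "\<theta> x = ennreal (a/2)"
    have "\<theta> x + \<theta> x = ennreal a" using tx a_nonneg by (simp flip: ennreal_plus)
    hence "x * x = 1" using O4[OF xin xin] by simp
    thus "x = 1" using xin by (metis atLeastAtMost_iff abs_of_nonneg real_sqrt_abs real_sqrt_mult_self real_sqrt_one power2_eq_square)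
  next
    fix x :: real assume "x = 1" thus "\<theta> x = ennreal (a/2)" using t1 by simp
  qed
qed

end
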